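(* With notation as in the context, for each $s\in\mathbb{S}_{p^n}$, $$w(s)=\min\{D(s,t):t\in\mathbb{S}_{p^n}(h),\ \mathfrak{a}(t)\succeq s\}.$$
   Context: Let $p$ be a prime, $n\ge1$, $\mathbb{S}_{p^n}=\{0,\dots,p^n-1\}$; write $s\in\mathbb{S}_{p^n}$ as $s=\sum_{i=1}^n s_{(n-i)}p^{n-i}$ with digits in $\{0,\dots,p-1\}$, and $s\preceq t$ means $s_{(n-i)}\le t_{(n-i)}$ for all $i$. Let $b_1,\dots,b_n$ be integers prime to $p$, $\mathfrak{b}(s)=\sum_i s_{(n-i)}p^{n-i}b_i$, and for $t\in\mathbb{Z}$ let $\mathfrak{a}(t)\in\mathbb{S}_{p^n}$ be the unique element with $\mathfrak{b}(\mathfrak{a}(t))\equiv-t\pmod{p^n}$. Fix $h\in\mathbb{Z}$, let $\mathbb{S}_{p^n}(h)=\{t\in\mathbb{Z}:h\le t<h+p^n\}$, and let $b\in\mathbb{S}_{p^n}(h)$ be the unique element with $\mathfrak{a}(b)=p^n-1$. For $s\in\mathbb{S}_{p^n}$, $t\in\mathbb{S}_{p^n}(h)$ define $D(s,t)=\lfloor(\mathfrak{b}(s)+t-h)/p^n\rfloor$, $d(s)=D(s,b)$, and $w(s)=\min\{d(u)-d(u-s):u\in\mathbb{S}_{p^n},\,u\succeq s\}$. *)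

theory Defs
  imports "HOL-Number_Theory.Number_Theory"
begin

definition digit :: "nat \<Rightarrow> nat \<Rightarrow> nat \<Rightarrow> nat" where
  "digit p s k = (s div p ^ k) mod p"

definition digle :: "nat \<Rightarrow> nat \<Rightarrow> nat \<Rightarrow> nat \<Rightarrow> bool" where
  "digle p n s t \<longleftrightarrow> (\<forall>k<n. digit p s k \<le> digit p t k)"

definition bfrak :: "nat \<Rightarrow> nat \<Rightarrow> (nat \<Rightarrow> int) \<Rightarrow> nat \<Rightarrow> int" where
  "bfrak p n B s = (\<Sum>i=1..n. int (digit p s (n - i)) * int p ^ (n - i) * B i)"

definition afrak :: "nat \<Rightarrow> nat \<Rightarrow> (nat \<Rightarrow> int) \<Rightarrow> int \<Rightarrow> nat" where
  "afrak p n B t = (THE s. s < p ^ n \<and> [bfrak p n B s = - t] (mod int p ^ n))"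

definition bpt :: "nat \<Rightarrow> nat \<Rightarrow> (nat \<Rightarrow> int) \<Rightarrow> int \<Rightarrow> int" where
  "bpt p n B h = (THE t. h \<le> t \<and> t < h + int p ^ n \<and> afrak p n B t = p ^ n - 1)"

definition Dfun :: "nat \<Rightarrow> nat \<Rightarrow> (nat \<Rightarrow> int) \<Rightarrow> int \<Rightarrow> nat \<Rightarrow> int \<Rightarrow> int" where
  "Dfun p n B h s t = \<lfloor>(of_int (bfrak p n B s + t - h) :: real) / of_nat (p ^ n)\<rfloor>"

definition dfun :: "nat \<Rightarrow> nat \<Rightarrow> (nat \<Rightarrow> int) \<Rightarrow> int \<Rightarrow> nat \<Rightarrow> int" where
  "dfun p n B h s = Dfun p n B h s (bpt p n B h)"

definition wfun :: "nat \<Rightarrow> nat \<Rightarrow> (nat \<Rightarrow> int) \<Rightarrow> int \<Rightarrow> nat \<Rightarrow> int" where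
  "wfun p n B h s = Min ((\<lambda>u. dfun p n B h u - dfun p n B h (u - s)) ` {u. u < p ^ n \<and> digle p n s u})"

end

theory Submission
  imports Defs
begin


lemma digit_0: "digit p x 0 = x mod p" by (simp add: digit_def)
lemma digit_Suc: "digit p x (Suc k) = digit p (x div p) k"
  by (simp add: digit_def div_mult2_eq)
lemma digit_lt: "p > 0 \<Longrightarrow> digit p x k < p" by (simp add: digit_def)

definition dsum :: "nat \<Rightarrow> nat \<Rightarrow> (nat \<Rightarrow> nat) \<Rightarrow> nat" where
  "dsum p n a = (\<Sum>k<n. a k * p^k)"

lemma dsum_Suc: "dsum p (Suc n) a = a 0 + p * dsum p n (\<lambda>k. a (Suc k))"
  unfolding dsum_def by (subst sum.lessThan_Suc_shift) (simp del: sum.lessThan_Suc add: sum_distrib_left mult_ac)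

lemma dsum_lt: "p > 0 \<Longrightarrow> \<forall>k<n. a k < p \<Longrightarrow> dsum p n a < p^n"
proof (induction n arbitrary: a)
  case 0 then show ?case by (simp add: dsum_def)
next
  case (Suc n)
  have D: "dsum p n (\<lambda>k. a (Suc k)) < p^n" using Suc by auto
  have "a 0 < p" using Suc by auto
  then have "a 0 + p * dsum p n (\<lambda>k. a (Suc k)) < p * (dsum p n (\<lambda>k. a (Suc k)) + 1)" by simp
  also have "\<dots> \<le> p * p^n" using D by (intro mult_le_mono2) simp
  finally show ?case by (simp add: dsum_Suc)
qed

lemma digit_dsum: "p > 0 \<Longrightarrow> \<forall>k<n. a k < p \<Longrightarrow> k < n \<Longrightarrow> digit p (dsum p n a) k = a k"
proof (induction n arbitrary: a k)
  case 0 then show ?case by simp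
next
  case (Suc n)
  show ?case
  proof (cases k)
    case 0 then show ?thesis using Suc.prems by (simp add: dsum_Suc digit_0)
  next
    case (Suc k')
    have "dsum p (Suc n) a div p = dsum p n (\<lambda>k. a (Suc k))"
      using Suc.prems by (simp add: dsum_Suc)
    then show ?thesis using Suc.IH[of "\<lambda>k. a (Suc k)" k'] Suc.prems Suc
      by (simp add: digit_Suc)
  qed
qed

lemma dsum_digit: "p > 0 \<Longrightarrow> x < p^n \<Longrightarrow> dsum p n (digit p x) = x"
proof (induction n arbitrary: x)
  case 0 then show ?case by (simp add: dsum_def)
next
  case (Suc n)
  have "x div p < p^n" using Suc.prems by (simp add: less_mult_imp_div_less mult.commute)
  then have "dsum p n (digit p (x div p)) = x div p" using Suc by blast
  then show ?case by (simp add: dsum_Suc digit_0 digit_Suc)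
qed

lemma dsum_add: "dsum p n (\<lambda>k. a k + b k) = dsum p n a + dsum p n b"
  by (simp add: dsum_def algebra_simps sum.distrib)

lemma dsum_cong: "\<forall>k<n. a k = b k \<Longrightarrow> dsum p n a = dsum p n b"
  by (simp add: dsum_def)

lemma dsum_max: "p > 0 \<Longrightarrow> dsum p n (\<lambda>k. p - 1) + 1 = p^n"
proof (induction n)
  case 0 then show ?case by (simp add: dsum_def)
next
  case (Suc n)
  have "dsum p (Suc n) (\<lambda>k. p - 1) + 1 = p + p * dsum p n (\<lambda>k. p - 1)"
    using Suc.prems by (simp add: dsum_Suc)
  also have "\<dots> = p * (dsum p n (\<lambda>k. p - 1) + 1)" by (simp add: algebra_simps)
  also have "\<dots> = p * p^n" using Suc by simp
  finally show ?case by simp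
qed

lemma digit_max: "p > 0 \<Longrightarrow> k < n \<Longrightarrow> digit p (p^n - 1) k = p - 1"
proof -
  assume "p > 0" "k < n"
  then have "p^n - 1 = dsum p n (\<lambda>k. p - 1)" using dsum_max[of p n] by simp
  then show ?thesis using digit_dsum[of p n "\<lambda>k. p - 1" k] \<open>p>0\<close> \<open>k<n\<close> by simp
qed

lemma digit_compl: "p > 0 \<Longrightarrow> x < p^n \<Longrightarrow> k < n \<Longrightarrow> digit p (p^n - 1 - x) k = p - 1 - digit p x k"
proof -
  assume p: "p > 0" and x: "x < p^n" and k: "k < n"
  define a where "a = (\<lambda>k. p - 1 - digit p x k)"
  have "\<forall>k<n. a k + digit p x k = p - 1"
  proof (intro allI impI)
    fix k have "digit p x k < p" by (rule digit_lt[OF p])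
    then show "a k + digit p x k = p - 1" unfolding a_def by arith
  qed
  then have "dsum p n a + dsum p n (digit p x) = dsum p n (\<lambda>k. p - 1)"
    by (metis (no_types, lifting) dsum_add dsum_cong)
  then have "dsum p n a = p^n - 1 - x" using dsum_max[OF p, of n] dsum_digit[OF p x] by simp
  moreover have "\<forall>k<n. a k < p" using p by (simp add: a_def)
  ultimately show ?thesis using digit_dsum[OF p, of n a k] k by (simp add: a_def)
qed



lemma bfrak_alt: "bfrak p n B s = (\<Sum>k<n. int (digit p s k) * int p ^ k * B (n - k))"
  unfolding bfrak_def
proof (rule sum.reindex_bij_witness[where i="\<lambda>k. n - k" and j="\<lambda>i. n - i"])
qed auto

lemma inj_core:
  assumes "prime p"
  shows "(\<forall>k<n. coprime (C k) (int p) \<and> \<bar>e k\<bar> < int p) \<Longrightarrow>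
     (int p)^n dvd (\<Sum>k<n. e k * int p^k * C k) \<Longrightarrow> \<forall>k<n. e k = 0"
proof (induction n arbitrary: e C)
  case 0 then show ?case by simp
next
  case (Suc n)
  have pi: "prime (int p)" using assms by simp
  define R where "R = (\<Sum>k<n. e (Suc k) * int p^k * C (Suc k))"
  have S: "(\<Sum>k<Suc n. e k * int p^k * C k) = e 0 * C 0 + int p * R"
    unfolding R_def by (subst sum.lessThan_Suc_shift) (simp del: sum.lessThan_Suc add: sum_distrib_left mult_ac)
  have dS: "int p ^ Suc n dvd e 0 * C 0 + int p * R" using Suc.prems(2) S by simp
  have "int p dvd int p ^ Suc n" by simp
  then have d1: "int p dvd e 0 * C 0 + int p * R" using dS by (rule dvd_trans)
  then have "int p dvd e 0 * C 0" by (simp add: dvd_add_left_iff)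
  moreover have "\<not> int p dvd C 0"
  proof
    assume a: "int p dvd C 0"
    have "coprime (C 0) (int p)" using Suc.prems(1) by simp
    then have "is_unit (int p)" using a by (simp add: coprime_absorb_right)
    then show False using pi by simp
  qed
  ultimately have dv0: "int p dvd e 0" using pi by (simp add: prime_dvd_mult_iff)
  have lt0: "\<bar>e 0\<bar> < int p" using Suc.prems(1) by simp
  have e0: "e 0 = 0"
  proof (rule ccontr)
    assume "e 0 \<noteq> 0"
    then have "\<bar>int p\<bar> \<le> \<bar>e 0\<bar>" using dv0 by (rule dvd_imp_le_int)
    then show False using lt0 by simp
  qed
  have "int p * int p ^ n dvd int p * R" using dS e0 by simp
  then have "int p ^ n dvd R" using pi by (simp add: prime_gt_0_int)
  moreover have "\<forall>k<n. coprime (C (Suc k)) (int p) \<and> \<bar>e (Suc k)\<bar> < int p" using Suc.prems(1) by simp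
  ultimately have es: "\<forall>k<n. e (Suc k) = 0" using Suc.IH[of "\<lambda>k. C (Suc k)" "\<lambda>k. e (Suc k)"] R_def by blast
  show ?case
  proof (intro allI impI)
    fix k assume "k < Suc n"
    then show "e k = 0" using e0 es by (cases k) auto
  qed
qed

lemma bfrak_inj:
  assumes p: "prime p" and B: "\<forall>i\<in>{1..n}. coprime (B i) (int p)"
    and s: "s < p^n" and s': "s' < p^n" and c: "[bfrak p n B s = bfrak p n B s'] (mod int p ^ n)"
  shows "s = s'"
proof -
  have p0: "p > 0" using p prime_gt_0_nat by blast
  define e where "e = (\<lambda>k. int (digit p s k) - int (digit p s' k))"
  have "bfrak p n B s - bfrak p n B s' = (\<Sum>k<n. e k * int p^k * B (n - k))"
    unfolding bfrak_alt e_def by (simp add: sum_subtractf algebra_simps)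
  then have dv: "int p ^ n dvd (\<Sum>k<n. e k * int p^k * B (n - k))"
    using c by (simp add: cong_iff_dvd_diff)
  have "\<forall>k<n. coprime (B (n-k)) (int p) \<and> \<bar>e k\<bar> < int p"
  proof (intro allI impI conjI)
    fix k assume k: "k < n"
    show "coprime (B (n-k)) (int p)" using B k by auto
    have "int (digit p s k) < int p" "int (digit p s' k) < int p"
      using digit_lt[OF p0] by auto
    then show "\<bar>e k\<bar> < int p" unfolding e_def by arith
  qed
  then have "\<forall>k<n. e k = 0" using inj_core[OF p, of n "\<lambda>k. B (n-k)" e] dv by blast
  then have "\<forall>k<n. digit p s k = digit p s' k" by (simp add: e_def)
  then have "dsum p n (digit p s) = dsum p n (digit p s')" by (rule dsum_cong)
  then show ?thesis using dsum_digit[OF p0 s] dsum_digit[OF p0 s'] by simp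
qed

lemma bfrak_ex:
  assumes p: "prime p" and B: "\<forall>i\<in>{1..n}. coprime (B i) (int p)"
  shows "\<exists>s<p^n. [bfrak p n B s = y] (mod int p ^ n)"
proof -
  define f where "f = (\<lambda>s. bfrak p n B s mod (int p ^ n))"
  have pos: "int p ^ n > 0" using p prime_gt_0_nat by auto
  have inj: "inj_on f {..<p^n}"
    by (intro inj_onI) (use bfrak_inj[OF p B] in \<open>auto simp: f_def cong_def\<close>)
  have sub: "f ` {..<p^n} \<subseteq> {0..<int p ^ n}" using pos by (auto simp: f_def)
  have "card (f ` {..<p^n}) = card {0..<int p ^ n}"
    using card_image[OF inj] by (simp del: of_nat_power add: of_nat_power[symmetric])
  then have "f ` {..<p^n} = {0..<int p ^ n}" using card_subset_eq[OF _ sub] by simp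
  moreover have "y mod int p ^ n \<in> {0..<int p ^ n}" using pos by simp
  ultimately obtain s where "s < p^n" "f s = y mod int p ^ n" by (metis imageE lessThan_iff)
  then show ?thesis by (auto simp: f_def cong_def)
qed

lemma cong_neg_swap: "[a = - b] (mod (m::int)) \<longleftrightarrow> [b = - a] (mod m)"
  unfolding cong_iff_dvd_diff
proof -
  have "b - - a = - (- (a - - b))" by simp
  show "(m dvd a - - b) = (m dvd b - - a)" by (simp add: add.commute)
qed

lemma afrak_prop:
  assumes p: "prime p" and B: "\<forall>i\<in>{1..n}. coprime (B i) (int p)"
  shows "afrak p n B t < p^n \<and> [bfrak p n B (afrak p n B t) = - t] (mod int p ^ n)"
proof -
  obtain s0 where s0: "s0 < p^n" "[bfrak p n B s0 = - t] (mod int p ^ n)"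
    using bfrak_ex[OF p B, of "-t"] by blast
  have "\<exists>!s. s < p ^ n \<and> [bfrak p n B s = - t] (mod int p ^ n)"
  proof (rule ex1I[of _ s0])
    show "s0 < p ^ n \<and> [bfrak p n B s0 = - t] (mod int p ^ n)" using s0 by blast
  next
    fix s assume a: "s < p ^ n \<and> [bfrak p n B s = - t] (mod int p ^ n)"
    then have "[bfrak p n B s = bfrak p n B s0] (mod int p ^ n)"
      using s0(2) cong_trans cong_sym by blast
    then show "s = s0" using bfrak_inj[OF p B] a s0(1) by blast
  qed
  then show ?thesis unfolding afrak_def by (rule theI')
qed

lemma afrak_eq:
  assumes p: "prime p" and B: "\<forall>i\<in>{1..n}. coprime (B i) (int p)"
    and s: "s < p^n" and c: "[bfrak p n B s = - t] (mod int p ^ n)"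
  shows "afrak p n B t = s"
proof -
  have a: "afrak p n B t < p^n" "[bfrak p n B (afrak p n B t) = - t] (mod int p ^ n)"
    using afrak_prop[OF p B, of t] by auto
  have "[bfrak p n B (afrak p n B t) = bfrak p n B s] (mod int p ^ n)"
    using a(2) c cong_trans cong_sym by blast
  then show ?thesis using bfrak_inj[OF p B] a(1) s by blast
qed

lemma window_eq:
  fixes t1 t2 h M :: int
  assumes "h \<le> t1" "t1 < h + M" "h \<le> t2" "t2 < h + M" "[t1 = t2] (mod M)"
  shows "t1 = t2"
proof -
  have "(t1 - h) mod M = (t2 - h) mod M" using assms(5) unfolding cong_def by (rule mod_diff_cong) simp
  moreover have "(t1 - h) mod M = t1 - h" using assms(1,2) by (intro mod_pos_pos_trivial) auto
  moreover have "(t2 - h) mod M = t2 - h" using assms(3,4) by (intro mod_pos_pos_trivial) auto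
  ultimately show ?thesis by simp
qed

lemma bpt_prop:
  assumes p: "prime p" and B: "\<forall>i\<in>{1..n}. coprime (B i) (int p)"
  shows "h \<le> bpt p n B h \<and> bpt p n B h < h + int p ^ n \<and> [bfrak p n B (p^n - 1) = - bpt p n B h] (mod int p ^ n)"
proof -
  have pos: "int p ^ n > 0" using p prime_gt_0_nat by auto
  have p0: "p > 0" using p prime_gt_0_nat by auto
  have lt: "p^n - 1 < p^n" using p0 by simp
  have iff: "afrak p n B t = p^n - 1 \<longleftrightarrow> [bfrak p n B (p^n - 1) = - t] (mod int p ^ n)" for t
  proof
    assume "afrak p n B t = p^n - 1"
    then show "[bfrak p n B (p^n - 1) = - t] (mod int p ^ n)" using afrak_prop[OF p B, of t] by simp
  next
    assume "[bfrak p n B (p^n - 1) = - t] (mod int p ^ n)"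
    then show "afrak p n B t = p^n - 1" using afrak_eq[OF p B lt] by blast
  qed
  define c where "c = bfrak p n B (p^n - 1)"
  define t0 where "t0 = h + ((- c - h) mod int p ^ n)"
  have t0: "h \<le> t0 \<and> t0 < h + int p ^ n" using pos by (simp add: t0_def)
  have "t0 mod int p ^ n = (- c) mod int p ^ n"
    unfolding t0_def by (metis add.commute diff_add_cancel mod_add_right_eq)
  then have "[t0 = - c] (mod int p ^ n)" by (simp add: cong_def)
  then have "[c = - t0] (mod int p ^ n)" by (simp add: cong_neg_swap)
  then have ex: "h \<le> t0 \<and> t0 < h + int p ^ n \<and> afrak p n B t0 = p^n - 1" using t0 iff c_def by blast
  have "\<exists>!t. h \<le> t \<and> t < h + int p ^ n \<and> afrak p n B t = p ^ n - 1"
  proof (rule ex1I[of _ t0])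
    show "h \<le> t0 \<and> t0 < h + int p ^ n \<and> afrak p n B t0 = p^n - 1" by (rule ex)
  next
    fix t assume tt: "h \<le> t \<and> t < h + int p ^ n \<and> afrak p n B t = p ^ n - 1"
    have c1: "[c = - t] (mod int p ^ n)" using iff tt c_def by blast
    have c2: "[c = - t0] (mod int p ^ n)" using iff ex c_def by blast
    have "[- t = - t0] (mod int p ^ n)" using c1 c2 cong_trans cong_sym by blast
    then have "[t = t0] (mod int p ^ n)" by (simp add: cong_minus_minus_iff)
    then show "t = t0" using tt ex window_eq by blast
  qed
  then have "h \<le> bpt p n B h \<and> bpt p n B h < h + int p ^ n \<and> afrak p n B (bpt p n B h) = p ^ n - 1"
    unfolding bpt_def by (rule theI')
  then show ?thesis using iff by blast
qed

lemma Dfun_div: "Dfun p n B h s t = (bfrak p n B s + t - h) div (int p ^ n)"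
proof -
  have "(of_int (bfrak p n B s + t - h) :: real) / of_nat (p ^ n) = of_int (bfrak p n B s + t - h) / of_int (int p ^ n)"
    by simp
  then show ?thesis unfolding Dfun_def by (simp only: floor_divide_of_int_eq)
qed



lemma bfrak_add:
  assumes "\<forall>k<n. digit p u k = digit p s k + digit p v k"
  shows "bfrak p n B u = bfrak p n B s + bfrak p n B v"
  unfolding bfrak_alt using assms by (simp add: sum.distrib[symmetric] algebra_simps)

lemma div_key:
  fixes a X M :: int
  assumes "M > 0"
  shows "(a + X) div M - X div M = (a + X mod M) div M"
proof -
  have "a + X = (a + X mod M) + (X div M) * M" by simp
  then have "(a + X) div M = (a + X mod M) div M + X div M"
    using assms by (metis div_mult_self1 less_irrefl add.commute)
  then show ?thesis by simp
qed

lemma core: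
  fixes h :: int
  assumes p: "prime p" and B: "\<forall>i\<in>{1..n}. coprime (B i) (int p)"
    and v: "v < p^n" and s: "s < p^n" and ds: "\<forall>k<n. digit p v k + digit p s k < p"
  defines "t \<equiv> h + ((bfrak p n B v + bpt p n B h - h) mod (int p ^ n))"
  shows "v + s < p^n \<and> (\<forall>k<n. digit p (v + s) k = digit p s k + digit p v k)
     \<and> dfun p n B h (v + s) - dfun p n B h v = Dfun p n B h s t
     \<and> h \<le> t \<and> t < h + int p ^ n \<and> afrak p n B t = p^n - 1 - v"
proof -
  have p0: "p > 0" using p prime_gt_0_nat by auto
  define M where "M = int p ^ n"
  have M0: "M > 0" using p0 by (simp add: M_def)
  define bb where "bb = bpt p n B h"
  have bbc: "[bfrak p n B (p^n - 1) = - bb] (mod M)" using bpt_prop[OF p B, of h] by (simp add: M_def bb_def)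
  define a where "a = (\<lambda>k. digit p v k + digit p s k)"
  have al: "\<forall>k<n. a k < p" using ds by (simp add: a_def)
  have "dsum p n a = v + s" unfolding a_def dsum_add using dsum_digit[OF p0 v] dsum_digit[OF p0 s] by simp
  then have lt: "v + s < p^n" and dg: "\<forall>k<n. digit p (v + s) k = digit p s k + digit p v k"
    using dsum_lt[OF p0 al] digit_dsum[OF p0 al] by (auto simp: a_def)
  have badd: "bfrak p n B (v + s) = bfrak p n B s + bfrak p n B v" using bfrak_add dg by blast
  define X where "X = bfrak p n B v + bb - h"
  have tX: "t = h + X mod M" by (simp add: t_def X_def M_def bb_def)
  have "dfun p n B h (v + s) - dfun p n B h v = (bfrak p n B s + X) div M - X div M"
    unfolding dfun_def Dfun_div badd by (simp add: X_def M_def bb_def algebra_simps)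
  also have "\<dots> = (bfrak p n B s + X mod M) div M" using div_key[OF M0] by blast
  also have "\<dots> = Dfun p n B h s t" unfolding Dfun_div tX by (simp add: M_def)
  finally have D: "dfun p n B h (v + s) - dfun p n B h v = Dfun p n B h s t" .
  have win: "h \<le> t \<and> t < h + int p ^ n" using M0 tX by (simp add: M_def)
  have clt: "p^n - 1 - v < p^n" using v by simp
  have "\<forall>k<n. digit p (p^n - 1) k = digit p (p^n - 1 - v) k + digit p v k"
    using digit_max[OF p0] digit_compl[OF p0 v] digit_lt[OF p0, of v] by (auto simp: Suc_le_eq)
  then have bc: "bfrak p n B (p^n - 1) = bfrak p n B (p^n - 1 - v) + bfrak p n B v" by (rule bfrak_add)
  have "M dvd bfrak p n B (p^n - 1) + bb" using bbc by (simp add: cong_iff_dvd_diff)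
  then have "M dvd (bfrak p n B (p^n - 1) + bb) - M * (X div M)" by simp
  moreover have "bfrak p n B (p^n - 1 - v) - (- t) = (bfrak p n B (p^n - 1) + bb) - M * (X div M)"
    using bc tX by (simp add: X_def minus_div_mult_eq_mod[symmetric] algebra_simps)
  ultimately have "[bfrak p n B (p^n - 1 - v) = - t] (mod M)" by (simp add: cong_iff_dvd_diff)
  then have "afrak p n B t = p^n - 1 - v" using afrak_eq[OF p B clt] by (simp add: M_def)
  with lt dg D win show ?thesis by blast
qed



theorem corollary3p9:
  fixes p n :: nat and B :: "nat \<Rightarrow> int" and h :: int and s :: nat
  assumes "prime p" and "n \<ge> 1"
    and "\<forall>i\<in>{1..n}. coprime (B i) (int p)"
    and "s < p ^ n"
  shows "wfun p n B h s
    = Min ((\<lambda>t. Dfun p n B h s t) ` {t. h \<le> t \<and> t < h + int p ^ n \<and> digle p n s (afrak p n B t)})"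
proof -
  note p = assms(1) and B = assms(3) and s = assms(4)
  have p0: "p > 0" using p prime_gt_0_nat by auto
  have "(\<lambda>u. dfun p n B h u - dfun p n B h (u - s)) ` {u. u < p ^ n \<and> digle p n s u}
      = (\<lambda>t. Dfun p n B h s t) ` {t. h \<le> t \<and> t < h + int p ^ n \<and> digle p n s (afrak p n B t)}"
  proof (intro equalityI subsetI)
    fix y assume "y \<in> (\<lambda>u. dfun p n B h u - dfun p n B h (u - s)) ` {u. u < p ^ n \<and> digle p n s u}"
    then obtain u where u: "u < p^n" "digle p n s u" and y: "y = dfun p n B h u - dfun p n B h (u - s)" by auto
    define v where "v = u - s"
    define a where "a = (\<lambda>k. digit p u k - digit p s k)"
    have le: "\<forall>k<n. digit p s k \<le> digit p u k" using u(2) by (simp add: digle_def)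
    have "\<forall>k<n. a k + digit p s k = digit p u k" using le by (simp add: a_def)
    then have "dsum p n a + dsum p n (digit p s) = dsum p n (digit p u)"
      by (metis (no_types, lifting) dsum_add dsum_cong)
    then have "dsum p n a + s = u" using dsum_digit[OF p0 s] dsum_digit[OF p0 u(1)] by simp
    then have va: "v = dsum p n a" and vs: "v + s = u" by (auto simp: v_def)
    have al: "\<forall>k<n. a k < p" using digit_lt[OF p0] by (simp add: a_def less_imp_diff_less)
    have vlt: "v < p^n" using dsum_lt[OF p0 al] va by simp
    have dv: "\<forall>k<n. digit p v k = a k" using digit_dsum[OF p0 al] va by simp
    have ds: "\<forall>k<n. digit p v k + digit p s k < p" using dv le digit_lt[OF p0, of u] by (simp add: a_def)
    define t where "t = h + ((bfrak p n B v + bpt p n B h - h) mod (int p ^ n))"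
    have C: "dfun p n B h (v + s) - dfun p n B h v = Dfun p n B h s t
      \<and> h \<le> t \<and> t < h + int p ^ n \<and> afrak p n B t = p^n - 1 - v"
      using core[OF p B vlt s ds, of h] unfolding t_def by blast
    have "digle p n s (afrak p n B t)"
      unfolding digle_def C[THEN conjunct2, THEN conjunct2, THEN conjunct2]
      using digit_compl[OF p0 vlt] ds by (auto simp: less_diff_conv)
    moreover have "y = Dfun p n B h s t" using C y vs v_def by simp
    ultimately show "y \<in> (\<lambda>t. Dfun p n B h s t) ` {t. h \<le> t \<and> t < h + int p ^ n \<and> digle p n s (afrak p n B t)}"
      using C by blast
  next
    fix y assume "y \<in> (\<lambda>t. Dfun p n B h s t) ` {t. h \<le> t \<and> t < h + int p ^ n \<and> digle p n s (afrak p n B t)}"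
    then obtain t where t: "h \<le> t" "t < h + int p ^ n" "digle p n s (afrak p n B t)" and y: "y = Dfun p n B h s t" by auto
    define c where "c = afrak p n B t"
    have cp: "c < p^n" "[bfrak p n B c = - t] (mod int p ^ n)" using afrak_prop[OF p B, of t] by (auto simp: c_def)
    define v where "v = p^n - 1 - c"
    have vlt: "v < p^n" using cp by (simp add: v_def)
    have dv: "\<forall>k<n. digit p v k = p - 1 - digit p c k" using digit_compl[OF p0 cp(1)] by (simp add: v_def)
    have le: "\<forall>k<n. digit p s k \<le> digit p c k" using t(3) by (simp add: digle_def c_def)
    have ds: "\<forall>k<n. digit p v k + digit p s k < p" 
    proof (intro allI impI)
      fix k assume k: "k < n"
      have "digit p v k = p - 1 - digit p c k" "digit p s k \<le> digit p c k" "digit p c k < p"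
        using dv le digit_lt[OF p0, of c k] k by auto
      then show "digit p v k + digit p s k < p" by arith
    qed
    define t' where "t' = h + ((bfrak p n B v + bpt p n B h - h) mod (int p ^ n))"
    have C: "v + s < p^n \<and> (\<forall>k<n. digit p (v + s) k = digit p s k + digit p v k)
     \<and> dfun p n B h (v + s) - dfun p n B h v = Dfun p n B h s t'
     \<and> h \<le> t' \<and> t' < h + int p ^ n \<and> afrak p n B t' = p^n - 1 - v"
      using core[OF p B vlt s ds, of h] unfolding t'_def by blast
    have "p^n - 1 - v = c" using cp(1) by (simp add: v_def)
    then have "afrak p n B t' = c" using C by simp
    then have "[bfrak p n B c = - t'] (mod int p ^ n)" using afrak_prop[OF p B, of t'] by simp
    then have "[- t' = - t] (mod int p ^ n)" using cp(2) cong_trans cong_sym by blast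
    then have "[t' = t] (mod int p ^ n)" by (simp add: cong_minus_minus_iff)
    then have tt: "t' = t" using window_eq C t(1,2) by blast
    have "digle p n s (v + s)" using C by (simp add: digle_def)
    moreover have "y = dfun p n B h (v + s) - dfun p n B h (v + s - s)" using C tt y by simp
    ultimately show "y \<in> (\<lambda>u. dfun p n B h u - dfun p n B h (u - s)) ` {u. u < p ^ n \<and> digle p n s u}"
      using C by blast
  qed
  then show ?thesis unfolding wfun_def by simp
qed

end
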